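(* Let $(X^t)_{t\ge 0}$ be the random walk on $G_{m,n}$ started at the identity and driven by the OST shuffle $OST_{m,n}$, and let $Y^t=(X^t)^{-1}$. For $j\in[n]$, let $T_j$ be the first time at which position $j$ is selected on the first draw of the shuffle (i.e. the first step in which the chosen index $j$ equals the given $j$). If $T_j\le t$, then $(Y^t)$ satisfies property $\mathcal{P}_j$ at time $t$, namely \[\mathbb{P}\bigl(Y^t(j)=x \mid Y^t(i)\text{ for all } j<i\le n\bigr)=\begin{cases}\frac{1}{mj}, & x\in\mathcal{G}^t_j,\\ 0,&\text{otherwise,}\end{cases}\] where $\mathcal{G}^t_j=\{\xi^k i: i\in[n],k\in\mathbb{Z}_m\}\setminus\{Y^t(\xi^k i): j<i\le n,\ k\in\mathbb{Z}_m\}$.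
   Context: Let $\xi$ be a primitive $m$-th root of unity and $[n]=\{1,\dots,n\}$. The generalized symmetric group $G_{m,n}$ is the group of bijections $\varphi$ of $\{\xi^k i: i\in[n],k\in\mathbb{Z}_m\}$ with $\varphi(\xi^k i)=\xi^k\varphi(i)$; equivalently tuples $(\xi^{k_1},\dots,\xi^{k_n},\sigma)$, $\sigma\in S_n$, acting by $i\mapsto \xi^{k_i}\sigma(i)$, with multiplication $(\xi^{k_1},\dots,\xi^{k_n},\sigma)(\xi^{k_1'},\dots,\xi^{k_n'},\sigma')=(\xi^{k_1}\xi^{k'_{\sigma(1)}},\dots,\xi^{k_n}\xi^{k'_{\sigma(n)}},\sigma\sigma')$. Elements are interpreted as arrangements of a deck of $n$ cards, each in one of $m$ orientations. For $1\le i\le j\le n$, $k\in\mathbb{Z}_m$, let $g_{i,j,k}$ have permutation part the transposition $(ij)$ (identity if $i=j$) and tuple with $\xi^k$ in positions $i$ and $j$ and $1$ elsewhere. One step of the OST shuffle: choose $j$ uniformly in $[n]$ (the "first draw"), then $i$ uniformly in $[j]$, and $k$ uniformly in $\mathbb{Z}_m$, independently, and multiply by $g_{i,j,k}$; so each triple has probability $\frac{1}{njm}$. For $\varphi\in G_{m,n}$ one writes $\varphi(\xi^k i)=\xi^k\varphi(i)$. *)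

theory Defs
  imports "HOL-Probability.Probability"
begin

text \<open>Elements of the generalized symmetric group G_{m,n} as pairs (k, sigma):
  k i is the exponent of xi in position i (an element of Z_m, stored as a nat below m),
  sigma is the permutation part (a permutation of {1..n}, identity elsewhere).
  The element xi^c i of the signed card set is represented by the pair (i, c).\<close>

type_synonym gsym = "(nat \<Rightarrow> nat) \<times> (nat \<Rightarrow> nat)"

text \<open>Multiplication exactly as in the paper:
  (k, sigma)(k', sigma') = (i |-> k_i + k'_{sigma(i)}, sigma sigma'),
  where the permutation product sigma sigma' means "first sigma, then sigma'"
  (the only reading for which the formula is associative).\<close>
definition gmult :: "nat \<Rightarrow> gsym \<Rightarrow> gsym \<Rightarrow> gsym" where
  "gmult m a b = ((\<lambda>i. (fst a i + fst b (snd a i)) mod m), snd b \<circ> snd a)"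

definition gid :: gsym where
  "gid = ((\<lambda>i. 0), id)"

definition ginv :: "nat \<Rightarrow> gsym \<Rightarrow> gsym" where
  "ginv m a = ((\<lambda>l. (m - fst a (inv (snd a) l) mod m) mod m), inv (snd a))"

definition gact :: "nat \<Rightarrow> gsym \<Rightarrow> nat \<times> nat \<Rightarrow> nat \<times> nat" where
  "gact m a x = (snd a (fst x), (snd x + fst a (fst x)) mod m)"

definition ggen :: "nat \<Rightarrow> nat \<Rightarrow> nat \<Rightarrow> nat \<Rightarrow> gsym" where
  "ggen m i j k = ((\<lambda>l. if l = i \<or> l = j then k mod m else 0),
                   (\<lambda>l. if l = i then j else if l = j then i else l))"

definition ost_step :: "nat \<Rightarrow> nat \<Rightarrow> (nat \<times> nat \<times> nat) pmf" where
  "ost_step m n =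
     pmf_of_set {1..n} \<bind> (\<lambda>j. pmf_of_set {1..j} \<bind> (\<lambda>i.
       pmf_of_set {..<m} \<bind> (\<lambda>k. return_pmf (j, i, k))))"

primrec ost_steps :: "nat \<Rightarrow> nat \<Rightarrow> nat \<Rightarrow> (nat \<times> nat \<times> nat) list pmf" where
  "ost_steps m n 0 = return_pmf []"
| "ost_steps m n (Suc t) = ost_steps m n t \<bind> (\<lambda>\<omega>. map_pmf (\<lambda>s. \<omega> @ [s]) (ost_step m n))"

definition Xwalk :: "nat \<Rightarrow> (nat \<times> nat \<times> nat) list \<Rightarrow> gsym" where
  "Xwalk m \<omega> = foldl (\<lambda>x (j, i, k). gmult m x (ggen m i j k)) gid \<omega>"

definition Ywalk :: "nat \<Rightarrow> (nat \<times> nat \<times> nat) list \<Rightarrow> gsym" where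
  "Ywalk m \<omega> = ginv m (Xwalk m \<omega>)"

text \<open>T_j \<le> t: position j was selected on the first draw in one of the first t steps.\<close>
definition hit_by :: "nat \<Rightarrow> (nat \<times> nat \<times> nat) list \<Rightarrow> bool" where
  "hit_by j \<omega> \<longleftrightarrow> (\<exists>s \<in> set \<omega>. fst s = j)"

definition Gset :: "nat \<Rightarrow> nat \<Rightarrow> gsym \<Rightarrow> nat \<Rightarrow> (nat \<times> nat) set" where
  "Gset m n Y j = {(i, c). i \<in> {1..n} \<and> c < m}
                  - {gact m Y (i, c) | i c. j < i \<and> i \<le> n \<and> c < m}"

end

theory Submission
  imports Defs "HOL-Combinatorics.Transposition"
begin


definition shi :: "nat \<Rightarrow> nat \<times> nat \<Rightarrow> int \<Rightarrow> nat \<times> nat" where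
  "shi m v c = (fst v, nat ((int (snd v) + c) mod int m))"

definition Fw :: "nat \<Rightarrow> (nat \<times> nat \<times> nat) list \<Rightarrow> nat \<Rightarrow> nat \<times> nat" where
  "Fw m \<omega> l = gact m (Ywalk m \<omega>) (l, 0)"

lemma snd_ggen: "snd (ggen m i j k) = Transposition.transpose i j"
  by (auto simp: ggen_def Transposition.transpose_def)

lemma Xwalk_snoc: "Xwalk m (\<omega> @ [(j, i, k)]) = gmult m (Xwalk m \<omega>) (ggen m i j k)"
  by (simp add: Xwalk_def)

lemma Xwalk_nil: "Xwalk m [] = gid" by (simp add: Xwalk_def)

lemma bij_Xwalk: "bij (snd (Xwalk m \<omega>))"
proof (induction \<omega> rule: rev_induct)
  case Nil thus ?case by (simp add: Xwalk_nil gid_def id_def[symmetric])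
next
  case (snoc s \<omega>)
  obtain j i k where s: "s = (j, i, k)" by (cases s) auto
  show ?case using bij_comp[OF snoc bij_transpose[of i j]]
    by (simp add: s Xwalk_snoc gmult_def snd_ggen comp_def)
qed

lemma int_negm: "0 < m \<Longrightarrow> int ((m - x mod m) mod m) = (- int x) mod int m"
proof -
  assume m: "0 < m"
  have "x mod m < m" using m by simp
  hence "int (m - x mod m) = int m - int (x mod m)" by simp
  hence "int ((m - x mod m) mod m) = (int m - int (x mod m)) mod int m" by (simp add: zmod_int)
  also have "\<dots> = (- int (x mod m)) mod int m" by (simp add: mod_diff_left_eq[symmetric])
  also have "\<dots> = (- int x) mod int m" by (simp add: zmod_int mod_minus_eq)
  finally show ?thesis .
qed

lemma Fw_snoc:
  assumes m: "0 < m"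
  shows "Fw m (\<omega> @ [(j, i, k)]) l =
     shi m (Fw m \<omega> (Transposition.transpose i j l)) (- int (if l = i \<or> l = j then k mod m else 0))"
proof -
  let ?X = "Xwalk m \<omega>" let ?g = "ggen m i j k"
  let ?t = "Transposition.transpose i j"
  have b: "bij (snd ?X)" by (rule bij_Xwalk)
  have inv: "inv (?t \<circ> snd ?X) = inv (snd ?X) \<circ> ?t"
    using b by (simp add: o_inv_distrib)
  define p where "p = inv (snd ?X) (?t l)"
  have sp: "snd ?X p = ?t l" unfolding p_def using b by (simp add: bij_def surj_f_inv_f)
  have kg: "fst ?g (?t l) = (if l = i \<or> l = j then k mod m else 0)"
    by (auto simp: ggen_def Transposition.transpose_def)
  have "Fw m (\<omega> @ [(j, i, k)]) l = (p, (m - (fst ?X p + (if l = i \<or> l = j then k mod m else 0)) mod m) mod m)"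
    by (simp add: Fw_def Ywalk_def Xwalk_snoc gmult_def ginv_def gact_def snd_ggen inv p_def[symmetric] sp kg)
  moreover have "Fw m \<omega> (?t l) = (p, (m - fst ?X p mod m) mod m)"
    by (simp add: Fw_def Ywalk_def ginv_def gact_def p_def)
  moreover have "(m - (a + kk) mod m) mod m = nat ((int ((m - a mod m) mod m) + - int kk) mod int m)" for a kk
  proof -
    have "((- int a) mod int m + - int kk) mod int m = (- int a + - int kk) mod int m"
      by (rule mod_add_left_eq)
    also have "\<dots> = (- int (a + kk)) mod int m" by simp
    also have "\<dots> = int ((m - (a + kk) mod m) mod m)" by (rule int_negm[symmetric, OF m])
    finally have "nat ((int ((m - a mod m) mod m) + - int kk) mod int m) = nat (int ((m - (a + kk) mod m) mod m))"
      by (simp only: int_negm[OF m])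
    thus ?thesis by simp
  qed
  ultimately show ?thesis by (simp only: shi_def fst_conv snd_conv)
qed

lemma Fw_nil: "Fw m [] l = (l, 0)"
  by (simp add: Fw_def Ywalk_def Xwalk_nil gid_def ginv_def gact_def)

lemma snd_Fw_lt: "0 < m \<Longrightarrow> snd (Fw m \<omega> l) < m"
  by (simp add: Fw_def gact_def)

lemma fst_shi[simp]: "fst (shi m v c) = fst v" by (simp add: shi_def)

lemma snd_shi_lt: "0 < m \<Longrightarrow> snd (shi m v c) < m"
  by (simp add: shi_def nat_less_iff)

lemma shi_0: "snd v < m \<Longrightarrow> shi m v 0 = v"
  by (cases v) (simp add: shi_def)

lemma shi_shi: "0 < m \<Longrightarrow> shi m (shi m v c) d = shi m v (c + d)"
  by (cases v) (simp add: shi_def mod_add_left_eq add.assoc)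

lemma fst_Fw_snoc: "0 < m \<Longrightarrow> fst (Fw m (\<omega> @ [(j, i, k)]) l) = fst (Fw m \<omega> (Transposition.transpose i j l))"
  by (simp add: Fw_snoc)

definition Sset :: "nat \<Rightarrow> nat \<Rightarrow> (nat \<times> nat \<times> nat) set" where
  "Sset m n = {(j', i', k). j' \<in> {1..n} \<and> i' \<in> {1..j'} \<and> k < m}"

lemma finite_Sset: "finite (Sset m n)"
proof -
  have "Sset m n \<subseteq> {1..n} \<times> {1..n} \<times> {..<m}" by (auto simp: Sset_def)
  thus ?thesis by (rule finite_subset) auto
qed

lemma inj_fst_Fw: "0 < m \<Longrightarrow> inj (\<lambda>l. fst (Fw m \<omega> l))"
proof (induction \<omega> rule: rev_induct)
  case Nil thus ?case by (simp add: Fw_nil inj_def)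
next
  case (snoc s \<omega>)
  obtain j i k where s: "s = (j, i, k)" by (cases s) auto
  have "inj ((\<lambda>l. fst (Fw m \<omega> l)) \<circ> Transposition.transpose i j)"
    using snoc by (intro inj_compose) (auto simp: inj_transpose)
  thus ?case using snoc by (simp add: s fst_Fw_snoc comp_def)
qed

lemma bij_fst_Fw: "0 < m \<Longrightarrow> set \<omega> \<subseteq> Sset m n \<Longrightarrow> bij_betw (\<lambda>l. fst (Fw m \<omega> l)) {1..n} {1..n}"
proof (induction \<omega> rule: rev_induct)
  case Nil thus ?case by (simp add: Fw_nil bij_betw_def)
next
  case (snoc s \<omega>)
  obtain j i k where s: "s = (j, i, k)" by (cases s) auto
  have ij: "i \<in> {1..n}" "j \<in> {1..n}" using snoc(3) by (auto simp: s Sset_def)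
  have "bij_betw ((\<lambda>l. fst (Fw m \<omega> l)) \<circ> Transposition.transpose i j) {1..n} {1..n}"
    using snoc ij by (intro bij_betw_trans[of _ _ "{1..n}"]) auto
  thus ?case using snoc by (simp add: s fst_Fw_snoc comp_def)
qed

lemma set_pmf_ost_step: "0 < m \<Longrightarrow> 0 < n \<Longrightarrow> set_pmf (ost_step m n) \<subseteq> Sset m n"
  by (auto simp: ost_step_def Sset_def set_pmf_of_set lessThan_empty_iff)

lemma set_pmf_ost_steps: "0 < m \<Longrightarrow> 0 < n \<Longrightarrow>
   set_pmf (ost_steps m n t) \<subseteq> {\<omega>. set \<omega> \<subseteq> Sset m n \<and> length \<omega> = t}"
proof (induction t)
  case 0 thus ?case by simp
next
  case (Suc t)
  show ?case
  proof
    fix \<omega> assume "\<omega> \<in> set_pmf (ost_steps m n (Suc t))"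
    then obtain a s where as: "a \<in> set_pmf (ost_steps m n t)" "s \<in> set_pmf (ost_step m n)" "\<omega> = a @ [s]"
      by auto
    have "set a \<subseteq> Sset m n" "length a = t" using as(1) Suc.IH[OF Suc.prems] by auto
    moreover have "s \<in> Sset m n" using as(2) set_pmf_ost_step[OF Suc.prems] by auto
    ultimately show "\<omega> \<in> {\<omega>. set \<omega> \<subseteq> Sset m n \<and> length \<omega> = Suc t}" using as(3) by auto
  qed
qed

lemma finite_set_pmf_ost_steps: "0 < m \<Longrightarrow> 0 < n \<Longrightarrow> finite (set_pmf (ost_steps m n t))"
  by (rule finite_subset[OF set_pmf_ost_steps]) (auto intro: finite_lists_length_eq finite_Sset)

lemma E_ost_step:
  assumes m: "0 < m" and n: "0 < n"
  shows "measure_pmf.expectation (ost_step m n) h =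
    (\<Sum>j'\<in>{1..n}. \<Sum>i'\<in>{1..j'}. \<Sum>k<m. h (j', i', k) / (real n * real j' * real m))"
proof -
  define q3 where "q3 j i = pmf_of_set {..<m} \<bind> (\<lambda>k. return_pmf (j, i, k))" for j i :: nat
  define q2 where "q2 j = pmf_of_set {1..j} \<bind> q3 j" for j
  have f3: "finite (set_pmf (q3 j i))" for j i
    using m by (simp add: q3_def set_pmf_of_set lessThan_empty_iff)
  have f2: "finite (set_pmf (q2 j))" if "1 \<le> j" for j
    using that f3 by (simp add: q2_def set_pmf_of_set)
  have e3: "measure_pmf.expectation (q3 j i) h = (\<Sum>k<m. h (j, i, k) / real m)" for j i
    unfolding q3_def using m
    by (subst pmf_expectation_bind_pmf_of_set) (auto simp: lessThan_empty_iff divide_inverse mult.commute)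
  have e2: "measure_pmf.expectation (q2 j) h = (\<Sum>i'\<in>{1..j}. (\<Sum>k<m. h (j, i', k) / real m) / real j)"
    if "1 \<le> j" for j
    unfolding q2_def using that f3
    by (subst pmf_expectation_bind_pmf_of_set) (auto simp: e3 divide_inverse mult.commute)
  have "measure_pmf.expectation (ost_step m n) h = (\<Sum>j'\<in>{1..n}. measure_pmf.expectation (q2 j') h / real n)"
    unfolding ost_step_def q2_def[symmetric, abs_def] q3_def[symmetric, abs_def] using n f2
    by (subst pmf_expectation_bind_pmf_of_set) (auto simp: divide_inverse mult.commute)
  also have "\<dots> = (\<Sum>j'\<in>{1..n}. \<Sum>i'\<in>{1..j'}. \<Sum>k<m. h (j', i', k) / (real n * real j' * real m))"
    by (intro sum.cong refl) (simp add: e2 sum_divide_distrib mult.commute mult.left_commute)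
  finally show ?thesis .
qed

lemma E_step:
  assumes m: "0 < m" and n: "0 < n"
  shows "measure_pmf.expectation (ost_steps m n (Suc t)) h =
    measure_pmf.expectation (ost_steps m n t)
      (\<lambda>\<omega>. \<Sum>j'\<in>{1..n}. \<Sum>i'\<in>{1..j'}. \<Sum>k<m. h (\<omega> @ [(j', i', k)]) / (real n * real j' * real m))"
proof -
  let ?p = "ost_steps m n t"
  have fin: "finite (set_pmf ?p)" by (rule finite_set_pmf_ost_steps[OF m n])
  have fin2: "finite (set_pmf (map_pmf (\<lambda>s. \<omega> @ [s]) (ost_step m n)))" for \<omega>
    using finite_subset[OF set_pmf_ost_step[OF m n] finite_Sset] by simp
  have "measure_pmf.expectation (ost_steps m n (Suc t)) h =
     (\<Sum>a\<in>set_pmf ?p. pmf ?p a *\<^sub>R measure_pmf.expectation (map_pmf (\<lambda>s. a @ [s]) (ost_step m n)) h)"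
    by (simp only: ost_steps.simps, rule pmf_expectation_bind) (use fin fin2 in auto)
  also have "\<dots> = (\<Sum>a\<in>set_pmf ?p. pmf ?p a *\<^sub>R 
      (\<Sum>j'\<in>{1..n}. \<Sum>i'\<in>{1..j'}. \<Sum>k<m. h (a @ [(j', i', k)]) / (real n * real j' * real m)))"
    by (simp add: E_ost_step[OF m n])
  also have "\<dots> = measure_pmf.expectation ?p
      (\<lambda>\<omega>. \<Sum>j'\<in>{1..n}. \<Sum>i'\<in>{1..j'}. \<Sum>k<m. h (\<omega> @ [(j', i', k)]) / (real n * real j' * real m))"
    by (rule integral_measure_pmf[symmetric]) (use fin in auto)
  finally show ?thesis .
qed



lemma shi_cong_mod: "c mod int m = d mod int m \<Longrightarrow> shi m v c = shi m v d"
  by (simp add: shi_def mod_add_right_eq[symmetric, of "int (snd v)" c] mod_add_right_eq[symmetric, of "int (snd v)" d])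

lemma mod_inj_lt: "(a - int k1) mod int m = (a - int k2) mod int m \<Longrightarrow> k1 < m \<Longrightarrow> k2 < m \<Longrightarrow> k1 = k2"
proof -
  assume h: "(a - int k1) mod int m = (a - int k2) mod int m" and k: "k1 < m" "k2 < m"
  hence "int m dvd ((a - int k1) - (a - int k2))" by (simp add: mod_eq_dvd_iff)
  hence d: "int m dvd (int k2 - int k1)" by simp
  show "k1 = k2"
  proof (rule ccontr)
    assume "k1 \<noteq> k2"
    hence "0 < \<bar>int k2 - int k1\<bar>" by simp
    moreover have "\<bar>int k2 - int k1\<bar> < int m" using k by simp
    moreover have "\<bar>int m\<bar> \<le> \<bar>int k2 - int k1\<bar>"
      using dvd_imp_le_int[of "int k2 - int k1" "int m"] d \<open>0 < \<bar>int k2 - int k1\<bar>\<close> by simp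
    ultimately show False by simp
  qed
qed

locale ctx =
  fixes m n j :: nat
  assumes m: "0 < m" and j1: "1 \<le> j" and jn: "j \<le> n"
begin

lemma n: "0 < n" using j1 jn by simp

definition R :: "(nat \<times> nat \<times> nat) list \<Rightarrow> nat \<Rightarrow> nat \<times> nat" where
  "R \<omega> = (\<lambda>l. if j < l \<and> l \<le> n then Fw m \<omega> l else (0, 0))"

definition av :: "(nat \<Rightarrow> nat \<times> nat) \<Rightarrow> (nat \<times> nat) set" where
  "av r = {x. fst x \<in> {1..n} \<and> snd x < m \<and> (\<forall>i\<in>{j<..n}. fst x \<noteq> fst (r i))}"

definition Et :: "nat \<Rightarrow> ((nat \<times> nat \<times> nat) list \<Rightarrow> real) \<Rightarrow> real" where
  "Et t h = measure_pmf.expectation (ost_steps m n t) h"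

definition LF :: "((nat \<Rightarrow> nat \<times> nat) \<Rightarrow> nat \<times> nat \<Rightarrow> real) \<Rightarrow> (nat \<times> nat \<times> nat) list \<Rightarrow> real" where
  "LF g \<omega> = (if hit_by j \<omega> then g (R \<omega>) (Fw m \<omega> j) else 0)"

definition RF :: "((nat \<Rightarrow> nat \<times> nat) \<Rightarrow> nat \<times> nat \<Rightarrow> real) \<Rightarrow> (nat \<times> nat \<times> nat) list \<Rightarrow> real" where
  "RF g \<omega> = (if hit_by j \<omega> then (\<Sum>x\<in>av (R \<omega>). g (R \<omega>) x) / (real m * real j) else 0)"

definition INV :: "nat \<Rightarrow> bool" where
  "INV t = (\<forall>g. Et t (LF g) = Et t (RF g))"

definition grp :: "((nat \<times> nat \<times> nat) list \<Rightarrow> real) \<Rightarrow> nat \<Rightarrow> (nat \<times> nat \<times> nat) list \<Rightarrow> real" where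
  "grp h j' \<omega> = (\<Sum>i'\<in>{1..j'}. \<Sum>k<m. h (\<omega> @ [(j', i', k)]))"

lemma finite_av: "finite (av r)"
proof -
  have "av r \<subseteq> {1..n} \<times> {..<m}" by (auto simp: av_def)
  thus ?thesis by (rule finite_subset) auto
qed

lemma Et_sum_pmf: "Et t f = (\<Sum>a\<in>set_pmf (ost_steps m n t). pmf (ost_steps m n t) a *\<^sub>R f a)"
  unfolding Et_def by (rule integral_measure_pmf) (use finite_set_pmf_ost_steps[OF m n] in auto)

lemma Et_cong: "(\<And>\<omega>. set \<omega> \<subseteq> Sset m n \<Longrightarrow> f \<omega> = g \<omega>) \<Longrightarrow> Et t f = Et t g"
  unfolding Et_sum_pmf using set_pmf_ost_steps[OF m n, of t] by (intro sum.cong refl) auto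

lemma Et_sum: "Et t (\<lambda>\<omega>. \<Sum>a\<in>A. f a \<omega>) = (\<Sum>a\<in>A. Et t (f a))"
  unfolding Et_def
  by (intro Bochner_Integration.integral_sum integrable_measure_pmf_finite finite_set_pmf_ost_steps m n)

lemma Et_mult: "Et t (\<lambda>\<omega>. c * f \<omega>) = c * Et t f"
  unfolding Et_def by simp

lemma Et_div: "Et t (\<lambda>\<omega>. f \<omega> / c) = Et t f / c"
  unfolding Et_def by simp

lemma Fw_snoc_other: "l \<noteq> i' \<Longrightarrow> l \<noteq> j' \<Longrightarrow> Fw m (\<omega> @ [(j', i', k)]) l = Fw m \<omega> l"
  by (simp add: Fw_snoc[OF m] shi_0 snd_Fw_lt[OF m])

lemma Fw_snoc_j': "k < m \<Longrightarrow> Fw m (\<omega> @ [(j', i', k)]) j' = shi m (Fw m \<omega> i') (- int k)"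
  by (simp add: Fw_snoc[OF m])

lemma Fw_snoc_i': "k < m \<Longrightarrow> Fw m (\<omega> @ [(j', i', k)]) i' = shi m (Fw m \<omega> j') (- int k)"
  by (simp add: Fw_snoc[OF m])

lemma hit_snoc: "hit_by j (\<omega> @ [(j', i', k)]) = (hit_by j \<omega> \<or> j' = j)"
  by (auto simp: hit_by_def)

lemma B1:
  assumes v: "set \<omega> \<subseteq> Sset m n"
  shows "bij_betw (\<lambda>p. shi m (Fw m \<omega> (fst p)) (- int (snd p))) ({1..j} \<times> {..<m}) (av (R \<omega>))"
proof -
  let ?f = "\<lambda>p. shi m (Fw m \<omega> (fst p)) (- int (snd p))"
  have inj: "inj (\<lambda>l. fst (Fw m \<omega> l))" by (rule inj_fst_Fw[OF m])
  have bj: "bij_betw (\<lambda>l. fst (Fw m \<omega> l)) {1..n} {1..n}" by (rule bij_fst_Fw[OF m v])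
  show ?thesis
  proof (rule bij_betw_imageI)
    show "inj_on ?f ({1..j} \<times> {..<m})"
    proof (rule inj_onI)
      fix p q assume p: "p \<in> {1..j} \<times> {..<m}" and q: "q \<in> {1..j} \<times> {..<m}" and e: "?f p = ?f q"
      have "fst (Fw m \<omega> (fst p)) = fst (Fw m \<omega> (fst q))" using arg_cong[OF e, of fst] by simp
      hence f: "fst p = fst q" using inj by (simp add: inj_def)
      have "nat ((int (snd (Fw m \<omega> (fst p))) + - int (snd p)) mod int m) = nat ((int (snd (Fw m \<omega> (fst p))) + - int (snd q)) mod int m)"
        using arg_cong[OF e, of snd] f by (simp add: shi_def)
      hence "(int (snd (Fw m \<omega> (fst p))) - int (snd p)) mod int m = (int (snd (Fw m \<omega> (fst p))) - int (snd q)) mod int m"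
        using m by (subst (asm) eq_nat_nat_iff) auto
      hence "snd p = snd q" using p q by (intro mod_inj_lt) auto
      thus "p = q" using f by (simp add: prod_eq_iff)
    qed
  next
    show "?f ` ({1..j} \<times> {..<m}) = av (R \<omega>)"
    proof
      show "?f ` ({1..j} \<times> {..<m}) \<subseteq> av (R \<omega>)"
      proof
        fix x assume "x \<in> ?f ` ({1..j} \<times> {..<m})"
        then obtain i' k where ik: "i' \<in> {1..j}" "k < m" and xe: "x = ?f (i', k)" by auto
        have "fst (Fw m \<omega> i') \<in> {1..n}" using bj ik jn by (auto simp: bij_betw_def)
        moreover have "fst (Fw m \<omega> i') \<noteq> fst (R \<omega> i)" if "i \<in> {j<..n}" for i
          using that ik inj unfolding R_def inj_def by (metis greaterThanAtMost_iff atLeastAtMost_iff not_le)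
        ultimately show "x \<in> av (R \<omega>)" using xe by (auto simp: av_def snd_shi_lt[OF m])
      qed
    next
      show "av (R \<omega>) \<subseteq> ?f ` ({1..j} \<times> {..<m})"
      proof
        fix x assume x: "x \<in> av (R \<omega>)"
        hence "fst x \<in> (\<lambda>l. fst (Fw m \<omega> l)) ` {1..n}" using bj by (auto simp: av_def bij_betw_def)
        then obtain i' where i': "i' \<in> {1..n}" "fst (Fw m \<omega> i') = fst x" by auto
        have "i' \<le> j"
        proof (rule ccontr)
          assume "\<not> i' \<le> j"
          hence "i' \<in> {j<..n}" using i' by auto
          moreover have "\<forall>i\<in>{j<..n}. fst x \<noteq> fst (R \<omega> i)" using x by (simp add: av_def)
          ultimately have "fst x \<noteq> fst (R \<omega> i')" by blast
          moreover have "R \<omega> i' = Fw m \<omega> i'" using \<open>i' \<in> {j<..n}\<close> by (simp add: R_def)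
          ultimately show False using i' by simp
        qed
        define k where "k = nat ((int (snd (Fw m \<omega> i')) - int (snd x)) mod int m)"
        have k: "k < m" using m by (simp add: k_def nat_less_iff)
        have ik: "int k = (int (snd (Fw m \<omega> i')) - int (snd x)) mod int m" using m by (simp add: k_def)
        have "(int (snd (Fw m \<omega> i')) + - int k) mod int m = (int (snd (Fw m \<omega> i')) - (int (snd (Fw m \<omega> i')) - int (snd x))) mod int m"
          unfolding ik by (simp add: mod_diff_right_eq)
        also have "\<dots> = int (snd x)" using x by (simp add: av_def)
        finally have "?f (i', k) = x" using i' by (simp add: shi_def prod_eq_iff)
        thus "x \<in> ?f ` ({1..j} \<times> {..<m})" using i' \<open>i' \<le> j\<close> k by (intro image_eqI[of _ _ "(i', k)"]) auto
      qed
    qed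
  qed
qed

lemma sum_B1:
  assumes v: "set \<omega> \<subseteq> Sset m n"
  shows "(\<Sum>i'\<in>{1..j}. \<Sum>k<m. H (shi m (Fw m \<omega> i') (- int k))) = (\<Sum>x\<in>av (R \<omega>). H x)"
proof -
  have "(\<Sum>i'\<in>{1..j}. \<Sum>k<m. H (shi m (Fw m \<omega> i') (- int k))) =
        (\<Sum>p\<in>{1..j} \<times> {..<m}. H (shi m (Fw m \<omega> (fst p)) (- int (snd p))))"
    by (simp add: sum.cartesian_product split_beta)
  also have "\<dots> = (\<Sum>x\<in>av (R \<omega>). H x)"
    by (rule sum.reindex_bij_betw[OF B1[OF v]])
  finally show ?thesis .
qed


lemma Et_add: "Et t (\<lambda>\<omega>. f \<omega> + g \<omega>) = Et t f + Et t g"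
  unfolding Et_def
  by (intro Bochner_Integration.integral_add integrable_measure_pmf_finite finite_set_pmf_ost_steps m n)

lemma case_a:
  assumes I: "INV t" and j': "1 \<le> j'" "j' < j"
  shows "Et t (grp (LF g) j') = Et t (grp (RF g) j')"
proof -
  have same: "R (\<omega> @ [(j', i', k)]) = R \<omega> \<and> Fw m (\<omega> @ [(j', i', k)]) j = Fw m \<omega> j
      \<and> hit_by j (\<omega> @ [(j', i', k)]) = hit_by j \<omega>" if "i' \<in> {1..j'}" for \<omega> i' k
  proof (intro conjI)
    show "R (\<omega> @ [(j', i', k)]) = R \<omega>"
    proof
      fix l show "R (\<omega> @ [(j', i', k)]) l = R \<omega> l"
        using that j' by (cases "j < l \<and> l \<le> n") (auto simp: R_def intro!: Fw_snoc_other)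
    qed
    show "Fw m (\<omega> @ [(j', i', k)]) j = Fw m \<omega> j" using that j' by (intro Fw_snoc_other) auto
    show "hit_by j (\<omega> @ [(j', i', k)]) = hit_by j \<omega>" using j' by (simp add: hit_snoc)
  qed
  have L: "grp h j' = (\<lambda>\<omega>. real (j' * m) * h \<omega>)"
    if "\<And>\<omega> i' k. i' \<in> {1..j'} \<Longrightarrow> h (\<omega> @ [(j', i', k)]) = h \<omega>" for h
  proof
    fix \<omega>
    have "grp h j' \<omega> = (\<Sum>i'\<in>{1..j'}. \<Sum>k<m. h \<omega>)" unfolding grp_def using that by simp
    thus "grp h j' \<omega> = real (j' * m) * h \<omega>" by simp
  qed
  have "grp (LF g) j' = (\<lambda>\<omega>. real (j' * m) * LF g \<omega>)"
    by (rule L) (simp add: LF_def same)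
  moreover have "grp (RF g) j' = (\<lambda>\<omega>. real (j' * m) * RF g \<omega>)"
    by (rule L) (simp add: RF_def same)
  ultimately show ?thesis using I by (simp add: Et_mult INV_def)
qed

lemma case_b: "Et t (grp (LF g) j) = Et t (grp (RF g) j)"
proof (rule Et_cong)
  fix \<omega> assume v: "set \<omega> \<subseteq> Sset m n"
  have Rs: "R (\<omega> @ [(j, i', k)]) = R \<omega>" if "i' \<in> {1..j}" for i' k
  proof
    fix l show "R (\<omega> @ [(j, i', k)]) l = R \<omega> l"
      using that by (cases "j < l \<and> l \<le> n") (auto simp: R_def intro!: Fw_snoc_other)
  qed
  have "grp (LF g) j \<omega> = (\<Sum>i'\<in>{1..j}. \<Sum>k<m. g (R \<omega>) (shi m (Fw m \<omega> i') (- int k)))"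
    unfolding grp_def LF_def by (intro sum.cong refl) (simp add: Rs hit_snoc Fw_snoc_j')
  also have "\<dots> = (\<Sum>x\<in>av (R \<omega>). g (R \<omega>) x)" by (rule sum_B1[OF v])
  finally have 1: "grp (LF g) j \<omega> = (\<Sum>x\<in>av (R \<omega>). g (R \<omega>) x)" .
  have "grp (RF g) j \<omega> = (\<Sum>i'\<in>{1..j}. \<Sum>k<m. (\<Sum>x\<in>av (R \<omega>). g (R \<omega>) x) / (real m * real j))"
    unfolding grp_def RF_def by (intro sum.cong refl) (simp add: Rs hit_snoc)
  also have "\<dots> = (\<Sum>x\<in>av (R \<omega>). g (R \<omega>) x)" using m j1 by simp
  finally show "grp (LF g) j \<omega> = grp (RF g) j \<omega>" using 1 by simp
qed

definition permc :: "nat \<Rightarrow> nat \<Rightarrow> nat \<Rightarrow> (nat \<Rightarrow> nat \<times> nat) \<Rightarrow> nat \<Rightarrow> nat \<times> nat" where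
  "permc i' j' k r = (\<lambda>l. if j < l \<and> l \<le> n then shi m (r (Transposition.transpose i' j' l))
      (- int (if l = i' \<or> l = j' then k mod m else 0)) else (0, 0))"

lemma R_snoc_c:
  assumes "j < i'" "i' \<le> j'" "j' \<le> n"
  shows "R (\<omega> @ [(j', i', k)]) = permc i' j' k (R \<omega>)"
proof
  fix l
  have "j < Transposition.transpose i' j' l \<and> Transposition.transpose i' j' l \<le> n" if "j < l" "l \<le> n"
    using assms that by (auto simp: Transposition.transpose_def)
  thus "R (\<omega> @ [(j', i', k)]) l = permc i' j' k (R \<omega>) l"
    by (auto simp: R_def permc_def Fw_snoc[OF m])
qed

lemma av_pi:
  assumes "j < i'" "i' \<le> j'" "j' \<le> n"
  shows "av (permc i' j' k r) = av r"
proof -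
  let ?t = "Transposition.transpose i' j'"
  have img: "?t ` {j<..n} = {j<..n}" using assms by (intro transpose_image_eq) auto
  have "(\<forall>i\<in>{j<..n}. a \<noteq> fst (permc i' j' k r i)) = (\<forall>i\<in>{j<..n}. a \<noteq> fst (r (?t i)))" for a
    by (auto simp: permc_def)
  also have "(\<forall>i\<in>{j<..n}. a \<noteq> fst (r (?t i))) = (\<forall>i\<in>?t ` {j<..n}. a \<noteq> fst (r i))" for a
    by auto
  finally show ?thesis unfolding av_def img by simp
qed

lemma case_c:
  assumes I: "INV t" and a: "j < i'" "i' \<le> j'" "j' \<le> n"
  shows "Et t (\<lambda>\<omega>. LF g (\<omega> @ [(j', i', k)])) = Et t (\<lambda>\<omega>. RF g (\<omega> @ [(j', i', k)]))"
proof -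
  let ?g = "\<lambda>r x. g (permc i' j' k r) x"
  have h: "hit_by j (\<omega> @ [(j', i', k)]) = hit_by j \<omega>" for \<omega> using a by (simp add: hit_snoc)
  have f: "Fw m (\<omega> @ [(j', i', k)]) j = Fw m \<omega> j" for \<omega> using a by (intro Fw_snoc_other) auto
  have "(\<lambda>\<omega>. LF g (\<omega> @ [(j', i', k)])) = LF ?g"
    by (rule ext) (simp add: LF_def h f R_snoc_c[OF a])
  moreover have "(\<lambda>\<omega>. RF g (\<omega> @ [(j', i', k)])) = RF ?g"
    by (rule ext) (simp add: RF_def h R_snoc_c[OF a] av_pi[OF a])
  ultimately show ?thesis using I by (simp add: INV_def)
qed


lemma modback:
  assumes "X < m"
  shows "nat ((int Z + (int Rr - int (nat ((int Rr + (int Z - int X)) mod int m)))) mod int m) = X"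
proof -
  have e: "int (nat ((int Rr + (int Z - int X)) mod int m)) = (int Rr + (int Z - int X)) mod int m" using m by simp
  have "(int Z + (int Rr - (int Rr + (int Z - int X)) mod int m)) mod int m
      = (int Z + (int Rr - (int Rr + (int Z - int X)))) mod int m"
    by (metis mod_add_right_eq mod_diff_right_eq)
  also have "\<dots> = int X" using assms by simp
  finally show ?thesis unfolding e by simp
qed

lemma modback2:
  assumes "X < m"
  shows "nat ((int Z + (int Rr - (int Rr + (int Z - int X)) mod int m)) mod int m) = X"
  using modback[OF assms, of Z Rr] m by simp

definition phi :: "nat \<Rightarrow> (nat \<Rightarrow> nat \<times> nat) \<Rightarrow> nat \<times> nat \<Rightarrow> nat \<times> nat \<Rightarrow> nat \<times> nat" where
  "phi j' r z x = (if fst x = fst z then shi m (r j') (int (snd z) - int (snd x)) else x)"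

definition Gd :: "nat \<Rightarrow> ((nat \<Rightarrow> nat \<times> nat) \<Rightarrow> nat \<times> nat \<Rightarrow> real) \<Rightarrow> (nat \<Rightarrow> nat \<times> nat) \<Rightarrow> nat \<times> nat \<Rightarrow> real" where
  "Gd j' g r x = (\<Sum>z\<in>av r. g (r(j' := z)) (phi j' r z x))"

lemma PHI:
  assumes j': "j < j'" "j' \<le> n" and r1: "fst (r j') \<in> {1..n}"
    and r2: "\<forall>i\<in>{j<..n}. i \<noteq> j' \<longrightarrow> fst (r i) \<noteq> fst (r j')" and z: "z \<in> av r"
  shows "bij_betw (phi j' r z) (av r) (av (r(j' := z)))"
proof (rule bij_betw_byWitness[where f' = "\<lambda>y. if fst y = fst (r j') then shi m z (int (snd (r j')) - int (snd y)) else y"])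
  have zc: "fst z \<in> {1..n}" "snd z < m" "\<forall>i\<in>{j<..n}. fst z \<noteq> fst (r i)" using z by (auto simp: av_def)
  have zr: "fst z \<noteq> fst (r j')" using zc(3) j' by auto
  show "\<forall>a\<in>av r. (\<lambda>y. if fst y = fst (r j') then shi m z (int (snd (r j')) - int (snd y)) else y) (phi j' r z a) = a"
  proof
    fix a assume a: "a \<in> av r"
    have "fst a \<noteq> fst (r j')" using a j' by (auto simp: av_def)
    moreover have "snd a < m" using a by (auto simp: av_def)
    ultimately show "(\<lambda>y. if fst y = fst (r j') then shi m z (int (snd (r j')) - int (snd y)) else y) (phi j' r z a) = a"
      by (cases a) (auto simp: phi_def shi_def modback modback2)
  qed
  show "\<forall>a\<in>av (r(j' := z)). phi j' r z ((\<lambda>y. if fst y = fst (r j') then shi m z (int (snd (r j')) - int (snd y)) else y) a) = a"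
  proof
    fix a assume a: "a \<in> av (r(j' := z))"
    have "\<forall>i\<in>{j<..n}. fst a \<noteq> fst ((r(j' := z)) i)" using a by (simp add: av_def)
    hence "fst a \<noteq> fst z" using j' by (metis fun_upd_same greaterThanAtMost_iff)
    moreover have "snd a < m" using a by (auto simp: av_def)
    ultimately show "phi j' r z ((\<lambda>y. if fst y = fst (r j') then shi m z (int (snd (r j')) - int (snd y)) else y) a) = a"
      using zr by (cases a) (auto simp: phi_def shi_def modback modback2)
  qed
  show "phi j' r z ` av r \<subseteq> av (r(j' := z))"
  proof
    fix y assume "y \<in> phi j' r z ` av r"
    then obtain x where x: "x \<in> av r" and y: "y = phi j' r z x" by auto
    show "y \<in> av (r(j' := z))"
    proof (cases "fst x = fst z")
      case True
      then show ?thesis using y r1 r2 zr m by (auto simp: av_def phi_def snd_shi_lt)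
    next
      case False
      then show ?thesis using y x by (auto simp: av_def phi_def)
    qed
  qed
  show "(\<lambda>y. if fst y = fst (r j') then shi m z (int (snd (r j')) - int (snd y)) else y) ` av (r(j' := z)) \<subseteq> av r"
  proof
    fix y assume "y \<in> (\<lambda>y. if fst y = fst (r j') then shi m z (int (snd (r j')) - int (snd y)) else y) ` av (r(j' := z))"
    then obtain x where x: "x \<in> av (r(j' := z))" and y: "y = (if fst x = fst (r j') then shi m z (int (snd (r j')) - int (snd x)) else x)" by blast
    show "y \<in> av r"
    proof (cases "fst x = fst (r j')")
      case True
      then show ?thesis using y zc m by (auto simp: av_def snd_shi_lt)
    next
      case False
      then show ?thesis using y x by (auto simp: av_def split: if_splits)
    qed
  qed
qed

lemma R_snoc_d:
  assumes "i' \<le> j" "j < j'" "j' \<le> n" "k < m"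
  shows "R (\<omega> @ [(j', i', k)]) = (R \<omega>)(j' := shi m (Fw m \<omega> i') (- int k))"
proof
  fix l show "R (\<omega> @ [(j', i', k)]) l = ((R \<omega>)(j' := shi m (Fw m \<omega> i') (- int k))) l"
    using assms by (cases "l = j'") (auto simp: R_def Fw_snoc_j' intro!: Fw_snoc_other)
qed

lemma Fwj_snoc_d:
  assumes "i' \<in> {1..j}" "j < j'" "j' \<le> n" "k < m"
  shows "Fw m (\<omega> @ [(j', i', k)]) j = phi j' (R \<omega>) (shi m (Fw m \<omega> i') (- int k)) (Fw m \<omega> j)"
proof (cases "i' = j")
  case True
  have Rj': "R \<omega> j' = Fw m \<omega> j'" using assms by (simp add: R_def)
  have e: "int (nat ((int (snd (Fw m \<omega> j)) + - int k) mod int m)) = (int (snd (Fw m \<omega> j)) + - int k) mod int m"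
    using m by simp
  have "(int (nat ((int (snd (Fw m \<omega> j)) + - int k) mod int m)) - int (snd (Fw m \<omega> j))) mod int m = (- int k) mod int m"
    unfolding e by (simp add: mod_diff_left_eq)
  hence "shi m (Fw m \<omega> j') (- int k) = shi m (Fw m \<omega> j') (int (snd (shi m (Fw m \<omega> j) (- int k))) - int (snd (Fw m \<omega> j)))"
    by (intro shi_cong_mod) (simp add: shi_def)
  then show ?thesis using True assms by (simp add: Fw_snoc_i' phi_def Rj')
next
  case False
  have "fst (Fw m \<omega> i') \<noteq> fst (Fw m \<omega> j)" using False inj_fst_Fw[OF m] by (auto simp: inj_def)
  then show ?thesis using False assms by (simp add: phi_def Fw_snoc_other)
qed

lemma R_valid:
  assumes v: "set \<omega> \<subseteq> Sset m n" and j': "j < j'" "j' \<le> n"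
  shows "fst (R \<omega> j') \<in> {1..n}" "\<forall>i\<in>{j<..n}. i \<noteq> j' \<longrightarrow> fst (R \<omega> i) \<noteq> fst (R \<omega> j')"
proof -
  show "fst (R \<omega> j') \<in> {1..n}" using bij_fst_Fw[OF m v] j' by (auto simp: R_def bij_betw_def)
  show "\<forall>i\<in>{j<..n}. i \<noteq> j' \<longrightarrow> fst (R \<omega> i) \<noteq> fst (R \<omega> j')"
    using inj_fst_Fw[OF m] j' by (auto simp: R_def inj_def)
qed

lemma case_d:
  assumes I: "INV t" and j': "j < j'" "j' \<le> n"
  shows "Et t (\<lambda>\<omega>. \<Sum>i'\<in>{1..j}. \<Sum>k<m. LF g (\<omega> @ [(j', i', k)]))
       = Et t (\<lambda>\<omega>. \<Sum>i'\<in>{1..j}. \<Sum>k<m. RF g (\<omega> @ [(j', i', k)]))"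
proof -
  have h: "hit_by j (\<omega> @ [(j', i', k)]) = hit_by j \<omega>" for \<omega> i' k using j' by (simp add: hit_snoc)
  have "Et t (\<lambda>\<omega>. \<Sum>i'\<in>{1..j}. \<Sum>k<m. LF g (\<omega> @ [(j', i', k)])) = Et t (LF (Gd j' g))"
  proof (rule Et_cong)
    fix \<omega> assume v: "set \<omega> \<subseteq> Sset m n"
    let ?H = "\<lambda>z. if hit_by j \<omega> then g ((R \<omega>)(j' := z)) (phi j' (R \<omega>) z (Fw m \<omega> j)) else 0"
    have "(\<Sum>i'\<in>{1..j}. \<Sum>k<m. LF g (\<omega> @ [(j', i', k)])) = (\<Sum>i'\<in>{1..j}. \<Sum>k<m. ?H (shi m (Fw m \<omega> i') (- int k)))"
      using j' unfolding LF_def by (intro sum.cong refl) (simp add: h R_snoc_d Fwj_snoc_d)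
    also have "\<dots> = (\<Sum>z\<in>av (R \<omega>). ?H z)" by (rule sum_B1[OF v])
    also have "\<dots> = LF (Gd j' g) \<omega>" by (simp add: LF_def Gd_def)
    finally show "(\<Sum>i'\<in>{1..j}. \<Sum>k<m. LF g (\<omega> @ [(j', i', k)])) = LF (Gd j' g) \<omega>" .
  qed
  also have "\<dots> = Et t (RF (Gd j' g))" using I by (simp add: INV_def)
  also have "\<dots> = Et t (\<lambda>\<omega>. \<Sum>i'\<in>{1..j}. \<Sum>k<m. RF g (\<omega> @ [(j', i', k)]))"
  proof (rule Et_cong)
    fix \<omega> assume v: "set \<omega> \<subseteq> Sset m n"
    let ?H = "\<lambda>z. if hit_by j \<omega> then (\<Sum>x\<in>av ((R \<omega>)(j' := z)). g ((R \<omega>)(j' := z)) x) / (real m * real j) else 0"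
    have "(\<Sum>i'\<in>{1..j}. \<Sum>k<m. RF g (\<omega> @ [(j', i', k)])) = (\<Sum>i'\<in>{1..j}. \<Sum>k<m. ?H (shi m (Fw m \<omega> i') (- int k)))"
      using j' unfolding RF_def by (intro sum.cong refl) (simp add: h R_snoc_d)
    also have "\<dots> = (\<Sum>z\<in>av (R \<omega>). ?H z)" by (rule sum_B1[OF v])
    finally have 1: "(\<Sum>i'\<in>{1..j}. \<Sum>k<m. RF g (\<omega> @ [(j', i', k)])) = (\<Sum>z\<in>av (R \<omega>). ?H z)" .
    have "(\<Sum>x\<in>av (R \<omega>). Gd j' g (R \<omega>) x) = (\<Sum>z\<in>av (R \<omega>). \<Sum>x\<in>av (R \<omega>). g ((R \<omega>)(j' := z)) (phi j' (R \<omega>) z x))"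
      unfolding Gd_def by (rule sum.swap)
    also have "\<dots> = (\<Sum>z\<in>av (R \<omega>). \<Sum>x\<in>av ((R \<omega>)(j' := z)). g ((R \<omega>)(j' := z)) x)"
    proof (rule sum.cong[OF refl])
      fix z assume z: "z \<in> av (R \<omega>)"
      show "(\<Sum>x\<in>av (R \<omega>). g ((R \<omega>)(j' := z)) (phi j' (R \<omega>) z x)) = (\<Sum>x\<in>av ((R \<omega>)(j' := z)). g ((R \<omega>)(j' := z)) x)"
        by (rule sum.reindex_bij_betw[OF PHI[OF j' R_valid[OF v j'] z]])
    qed
    finally have 2: "(\<Sum>x\<in>av (R \<omega>). Gd j' g (R \<omega>) x) = (\<Sum>z\<in>av (R \<omega>). \<Sum>x\<in>av ((R \<omega>)(j' := z)). g ((R \<omega>)(j' := z)) x)" .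
    show "RF (Gd j' g) \<omega> = (\<Sum>i'\<in>{1..j}. \<Sum>k<m. RF g (\<omega> @ [(j', i', k)]))"
    proof -
      have "RF (Gd j' g) \<omega> = (\<Sum>z\<in>av (R \<omega>). ?H z)"
        by (cases "hit_by j \<omega>") (simp_all add: RF_def 2 sum_divide_distrib)
      thus ?thesis using 1 by simp
    qed
  qed
  finally show ?thesis .
qed


lemma split_grp:
  assumes "j \<le> j'"
  shows "grp h j' = (\<lambda>\<omega>. (\<Sum>i'\<in>{1..j}. \<Sum>k<m. h (\<omega> @ [(j', i', k)])) + (\<Sum>i'\<in>{j<..j'}. \<Sum>k<m. h (\<omega> @ [(j', i', k)])))"
proof
  fix \<omega>
  have u: "{1..j'} = {1..j} \<union> {j<..j'}" using assms j1 by auto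
  show "grp h j' \<omega> = (\<Sum>i'\<in>{1..j}. \<Sum>k<m. h (\<omega> @ [(j', i', k)])) + (\<Sum>i'\<in>{j<..j'}. \<Sum>k<m. h (\<omega> @ [(j', i', k)]))"
    unfolding grp_def u by (rule sum.union_disjoint) auto
qed

lemma Et_sum2: "Et t (\<lambda>\<omega>. \<Sum>i'\<in>A. \<Sum>k<m. f i' k \<omega>) = (\<Sum>i'\<in>A. \<Sum>k<m. Et t (f i' k))"
  by (simp add: Et_sum)

lemma key:
  assumes I: "INV t" and j': "j' \<in> {1..n}"
  shows "Et t (grp (LF g) j') = Et t (grp (RF g) j')"
proof -
  consider "j' < j" | "j' = j" | "j < j'" by linarith
  then show ?thesis
  proof cases
    case 1 then show ?thesis using case_a[OF I] j' by auto
  next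
    case 2 then show ?thesis using case_b by simp
  next
    case 3
    have c: "(\<Sum>i'\<in>{j<..j'}. \<Sum>k<m. Et t (\<lambda>\<omega>. LF g (\<omega> @ [(j', i', k)])))
           = (\<Sum>i'\<in>{j<..j'}. \<Sum>k<m. Et t (\<lambda>\<omega>. RF g (\<omega> @ [(j', i', k)])))"
      using j' by (intro sum.cong refl case_c[OF I]) auto
    have jj: "j \<le> j'" using 3 by simp
    show ?thesis
      using 3 j' unfolding split_grp[OF jj] 
      apply (simp only: Et_add)
      apply (subst case_d[OF I 3])
      using j' apply simp
      apply (simp only: Et_sum2 c)
      done
  qed
qed

lemma INV_0: "INV 0"
  by (simp add: INV_def Et_def LF_def RF_def hit_by_def)

lemma INV_Suc:
  assumes I: "INV t" shows "INV (Suc t)"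
  unfolding INV_def
proof
  fix g
  have e: "Et (Suc t) h = (\<Sum>j'\<in>{1..n}. Et t (grp h j') / (real n * real j' * real m))" for h
  proof -
    have "Et (Suc t) h = Et t (\<lambda>\<omega>. \<Sum>j'\<in>{1..n}. grp h j' \<omega> / (real n * real j' * real m))"
      unfolding Et_def E_step[OF m n] grp_def by (simp add: sum_divide_distrib)
    also have "\<dots> = (\<Sum>j'\<in>{1..n}. Et t (grp h j') / (real n * real j' * real m))"
      by (simp add: Et_sum Et_div)
    finally show ?thesis .
  qed
  show "Et (Suc t) (LF g) = Et (Suc t) (RF g)"
    unfolding e using key[OF I] by simp
qed

lemma INV_all: "INV t"
  by (induction t) (auto intro: INV_0 INV_Suc)

lemma Gset_av: "Gset m n (Ywalk m \<omega>) j = av (R \<omega>)"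
proof -
  let ?Y = "Ywalk m \<omega>"
  have fF: "fst (Fw m \<omega> i) = snd ?Y i" for i by (simp add: Fw_def gact_def)
  have g: "gact m ?Y (i, c) = (snd ?Y i, (c + fst ?Y i) mod m)" for i c by (simp add: gact_def)
  have mem: "(a, b) \<in> {gact m ?Y (i, c) | i c. j < i \<and> i \<le> n \<and> c < m} \<longleftrightarrow> (\<exists>i\<in>{j<..n}. a = snd ?Y i)"
    if b: "b < m" for a b
  proof
    assume "(a, b) \<in> {gact m ?Y (i, c) | i c. j < i \<and> i \<le> n \<and> c < m}"
    thus "\<exists>i\<in>{j<..n}. a = snd ?Y i" by (auto simp: g)
  next
    assume "\<exists>i\<in>{j<..n}. a = snd ?Y i"
    then obtain i where i: "i \<in> {j<..n}" "a = snd ?Y i" by blast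
    define f where "f = fst ?Y i"
    define c where "c = (b + (m - f mod m)) mod m"
    have c: "c < m" using m by (simp add: c_def)
    have "(c + f) mod m = (b + (m - f mod m) + f) mod m" by (simp add: c_def mod_add_left_eq)
    also have "\<dots> = (b + (m - f mod m) + f mod m) mod m" by (simp add: mod_add_right_eq)
    also have "\<dots> = (b + m) mod m"
    proof -
      have "f mod m < m" using m by simp
      hence "b + (m - f mod m) + f mod m = b + m" by simp
      thus ?thesis by (simp only:)
    qed
    also have "\<dots> = b" using b by simp
    finally have "gact m ?Y (i, c) = (a, b)" using i by (simp add: g f_def)
    thus "(a, b) \<in> {gact m ?Y (i, c) | i c. j < i \<and> i \<le> n \<and> c < m}" using i c by force
  qed
  show ?thesis
  proof (rule set_eqI)
    fix x :: "nat \<times> nat"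
    obtain a b where x: "x = (a, b)" by (cases x)
    show "x \<in> Gset m n ?Y j \<longleftrightarrow> x \<in> av (R \<omega>)"
    proof (cases "b < m")
      case True
      have "(\<forall>i\<in>{j<..n}. a \<noteq> fst (R \<omega> i)) \<longleftrightarrow> \<not> (\<exists>i\<in>{j<..n}. a = snd ?Y i)"
        by (auto simp: R_def fF)
      then show ?thesis using mem[OF True, of a] True by (auto simp: x Gset_def av_def)
    next
      case False
      then show ?thesis by (simp add: x Gset_def av_def)
    qed
  qed
qed

end

theorem proposition4p6:
  fixes m n j t :: nat and x :: "nat \<times> nat" and y :: "nat \<Rightarrow> nat \<times> nat"
  assumes "1 \<le> m" and "j \<in> {1..n}"
  defines "E \<equiv> {\<omega>. hit_by j \<omega> \<and> (\<forall>i\<in>{j<..n}. gact m (Ywalk m \<omega>) (i, 0) = y i)}"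
  shows "measure_pmf.prob (ost_steps m n t) {\<omega> \<in> E. gact m (Ywalk m \<omega>) (j, 0) = x}
       = measure_pmf.prob (ost_steps m n t) {\<omega> \<in> E. x \<in> Gset m n (Ywalk m \<omega>) j} / (real m * real j)"
proof -
  interpret ctx m n j using assms by unfold_locales auto
  define g where "g r z = (if (\<forall>i\<in>{j<..n}. r i = y i) \<and> z = x then 1 else 0 :: real)" for r z
  have Ry: "(\<forall>i\<in>{j<..n}. R \<omega> i = y i) \<longleftrightarrow> (\<forall>i\<in>{j<..n}. gact m (Ywalk m \<omega>) (i, 0) = y i)" for \<omega>
    by (simp add: R_def Fw_def)
  have L: "LF g = indicator {\<omega> \<in> E. gact m (Ywalk m \<omega>) (j, 0) = x}"
    by (rule ext) (auto simp: LF_def g_def E_def Ry Fw_def[symmetric] indicator_def)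
  have Rg: "RF g = (\<lambda>\<omega>. indicator {\<omega> \<in> E. x \<in> Gset m n (Ywalk m \<omega>) j} \<omega> / (real m * real j))"
  proof
    fix \<omega>
    have "(\<Sum>z\<in>av (R \<omega>). g (R \<omega>) z) = (if (\<forall>i\<in>{j<..n}. R \<omega> i = y i) \<and> x \<in> av (R \<omega>) then 1 else 0)"
    proof (cases "\<forall>i\<in>{j<..n}. R \<omega> i = y i")
      case True then show ?thesis by (simp add: finite_av sum.delta g_def)
    next
      case False
      have gz: "g (R \<omega>) z = 0" for z unfolding g_def using False by (intro if_not_P) blast
      have A: "(if (\<forall>i\<in>{j<..n}. R \<omega> i = y i) \<and> x \<in> av (R \<omega>) then 1 else 0) = (0::real)"
        using False by (intro if_not_P) blast
      show ?thesis by (simp only: A gz sum.neutral_const)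
    qed
    thus "RF g \<omega> = indicator {\<omega> \<in> E. x \<in> Gset m n (Ywalk m \<omega>) j} \<omega> / (real m * real j)"
      by (auto simp: RF_def E_def Ry Gset_av indicator_def)
  qed
  have "Et t (LF g) = Et t (RF g)" using INV_all by (simp add: INV_def)
  thus ?thesis unfolding L Rg Et_div by (simp add: Et_def)
qed

end
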